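(* Let $s\ge1$. If $f\in C^2(\mathbb{R}^s)$ and $H_n(f)<\infty$ for some $n\in\mathbb{N}_0$, then for any $n_0\in\mathbb{N}_0$ there exists a constant $C>0$ depending only on $n_0$ and $f$ such that $$\left|\sum_{\alpha\in\mathbb{Z}^s}\left|\hat{\boldsymbol d}_\alpha^n(f)\right|_2-\|f\|_{TV}\right|\le C\,2^{-n}\int_{\mathbb{R}^s}\left|D^2f(x)\right|_F\,dx\qquad\text{for all } n\ge n_0.$$
   Context: Univariate Haar functions: $\psi_0:=\chi_{[0,1]}$, $\psi_1:=\chi_{[0,\frac12]}-\chi_{[\frac12,1]}$; for $\theta\in\{0,1\}^s$, $\psi_\theta(x):=\prod_{j=1}^s\psi_{\theta_j}(x_j)$, and $d_{\theta,\alpha}^n(f):=2^{ns/2}\int_{\mathbb{R}^s}f(t)\psi_\theta(2^nt-\alpha)\,dt$ for $n\in\mathbb{N}_0$, $\alpha\in\mathbb{Z}^s$. Let $\epsilon_j\in\{0,1\}^s$ denote the $j$-th unit vector, and define $\hat{\boldsymbol d}_\alpha^n(f):=-2^{n(1-s/2)+2}\big(d^n_{\epsilon_1,\alpha}(f),\dots,d^n_{\epsilon_s,\alpha}(f)\big)\in\mathbb{R}^s$. $|\cdot|_2$ is the Euclidean norm, $\|f\|_{TV}:=\int_{\mathbb{R}^s}|\nabla f(x)|_2\,dx$. The Frobenius norm of the Hessian is $|D^2f(x)|_F:=\big(\sum_{j,k=1}^s(\partial^2f(x)/\partial x_j\partial x_k)^2\big)^{1/2}$. With $x_\alpha^n:=2^{-n}(\alpha+\frac12(1,\dots,1))$,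 $H_n(f):=\sum_{\alpha\in\mathbb{Z}^s}2^{-ns}\max_{x\in x_\alpha^n+2^{-n}[-\frac12,\frac12]^s}|D^2f(x)|_F$ (possibly $+\infty$). *)

theory Defs
  imports "HOL-Analysis.Analysis"
begin

text \<open>Dimension s = CARD('n); points of R^s are vectors real^'n (Euclidean norm).\<close>

definition unitvec :: "'n::finite \<Rightarrow> real^'n" where
  "unitvec j = axis j 1"

definition partial :: "'n::finite \<Rightarrow> (real^'n \<Rightarrow> real) \<Rightarrow> real^'n \<Rightarrow> real" where
  "partial j g x = deriv (\<lambda>t. g (x + t *\<^sub>R unitvec j)) 0"

definition has_partial :: "'n::finite \<Rightarrow> (real^'n \<Rightarrow> real) \<Rightarrow> real^'n \<Rightarrow> bool" where
  "has_partial j g x \<longleftrightarrow> (\<lambda>t. g (x + t *\<^sub>R unitvec j)) differentiable (at 0)"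

definition C2 :: "(real^'n::finite \<Rightarrow> real) \<Rightarrow> bool" where
  "C2 f \<longleftrightarrow> continuous_on UNIV f
     \<and> (\<forall>j x. has_partial j f x) \<and> (\<forall>j. continuous_on UNIV (partial j f))
     \<and> (\<forall>j k x. has_partial j (partial k f) x)
     \<and> (\<forall>j k. continuous_on UNIV (partial j (partial k f)))"

definition grad :: "(real^'n::finite \<Rightarrow> real) \<Rightarrow> real^'n \<Rightarrow> real^'n" where
  "grad f x = (\<chi> j. partial j f x)"

definition hessF :: "(real^'n::finite \<Rightarrow> real) \<Rightarrow> real^'n \<Rightarrow> real" where
  "hessF f x = sqrt (\<Sum>j\<in>UNIV. \<Sum>k\<in>UNIV. (partial j (partial k f) x)\<^sup>2)"

definition TV :: "(real^'n::finite \<Rightarrow> real) \<Rightarrow> ennreal" where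
  "TV f = (\<integral>\<^sup>+ x. ennreal (norm (grad f x)) \<partial>lborel)"

definition hess_int :: "(real^'n::finite \<Rightarrow> real) \<Rightarrow> ennreal" where
  "hess_int f = (\<integral>\<^sup>+ x. ennreal (hessF f x) \<partial>lborel)"

definition psi0 :: "real \<Rightarrow> real" where
  "psi0 x = indicator {0..1} x"

definition psi1 :: "real \<Rightarrow> real" where
  "psi1 x = indicator {0..1/2} x - indicator {1/2..1} x"

text \<open>theta \<in> {0,1}^s encoded as 'n \<Rightarrow> bool (True = 1).\<close>
definition psi :: "('n::finite \<Rightarrow> bool) \<Rightarrow> real^'n \<Rightarrow> real" where
  "psi \<theta> x = (\<Prod>j\<in>UNIV. (if \<theta> j then psi1 else psi0) (x $ j))"

definition of_intvec :: "int^'n::finite \<Rightarrow> real^'n" where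
  "of_intvec \<alpha> = (\<chi> j. real_of_int (\<alpha> $ j))"

definition dcoef :: "nat \<Rightarrow> ('n::finite \<Rightarrow> bool) \<Rightarrow> int^'n \<Rightarrow> (real^'n \<Rightarrow> real) \<Rightarrow> real" where
  "dcoef n \<theta> \<alpha> f = 2 powr (real n * real CARD('n) / 2) *
     (\<integral>t. f t * psi \<theta> ((2::real)^n *\<^sub>R t - of_intvec \<alpha>) \<partial>lborel)"

definition eps :: "'n::finite \<Rightarrow> 'n \<Rightarrow> bool" where
  "eps j = (\<lambda>k. k = j)"

definition dhat :: "nat \<Rightarrow> int^'n::finite \<Rightarrow> (real^'n \<Rightarrow> real) \<Rightarrow> real^'n" where
  "dhat n \<alpha> f = (\<chi> j. - (2 powr (real n * (1 - real CARD('n) / 2) + 2)) * dcoef n (eps j) \<alpha> f)"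

definition xpt :: "nat \<Rightarrow> int^'n::finite \<Rightarrow> real^'n" where
  "xpt n \<alpha> = (2 powr (- real n)) *\<^sub>R (of_intvec \<alpha> + (\<chi> j. 1/2))"

definition cube :: "nat \<Rightarrow> int^'n::finite \<Rightarrow> (real^'n) set" where
  "cube n \<alpha> = (\<lambda>y. xpt n \<alpha> + (2 powr (- real n)) *\<^sub>R y) ` {y. \<forall>j. y $ j \<in> {-1/2..1/2}}"

definition H :: "nat \<Rightarrow> (real^'n::finite \<Rightarrow> real) \<Rightarrow> ennreal" where
  "H n f = (\<Sum>\<^sub>\<infinity>\<alpha>\<in>(UNIV::(int^'n) set).
      ennreal (2 powr (- real n * real CARD('n)) * (SUP x\<in>cube n \<alpha>. hessF f x)))"

definition dsum :: "nat \<Rightarrow> (real^'n::finite \<Rightarrow> real) \<Rightarrow> ennreal" where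
  "dsum n f = (\<Sum>\<^sub>\<infinity>\<alpha>\<in>(UNIV::(int^'n) set). ennreal (norm (dhat n \<alpha> f)))"

end

theory Submission
  imports Defs
begin

lemma infsum_ennreal_nat_suminf:
  fixes G :: "nat \<Rightarrow> ennreal"
  shows "infsum G UNIV = suminf G"
proof -
  have "(G has_sum infsum G UNIV) UNIV" by (rule has_sum_infsum) (simp add: nonneg_summable_on_complete)
  then have "G sums infsum G UNIV" by (rule has_sum_imp_sums)
  then show ?thesis by (simp add: sums_iff)
qed

lemma infsum_countable_as_suminf:
  fixes G :: "'i::countable \<Rightarrow> ennreal"
  shows "infsum G UNIV = (\<Sum>k. if k \<in> range (to_nat :: 'i \<Rightarrow> nat) then G (from_nat k) else 0)"
proof -
  let ?H = "\<lambda>k. if k \<in> range (to_nat :: 'i \<Rightarrow> nat) then G (from_nat k) else 0"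
  have "infsum G UNIV = infsum (?H \<circ> (to_nat :: 'i \<Rightarrow> nat)) UNIV"
    by (rule infsum_cong) simp
  also have "\<dots> = infsum ?H (range (to_nat :: 'i \<Rightarrow> nat))"
    by (subst infsum_reindex) (auto intro: inj_to_nat)
  also have "\<dots> = infsum ?H UNIV"
    by (intro infsum_cong_neutral) auto
  also have "\<dots> = suminf ?H" by (rule infsum_ennreal_nat_suminf)
  finally show ?thesis .
qed

lemma nn_integral_infsum:
  fixes f :: "'i::countable \<Rightarrow> 'a \<Rightarrow> ennreal"
  assumes [measurable]: "\<And>i. f i \<in> borel_measurable M"
  shows "(\<integral>\<^sup>+x. (\<Sum>\<^sub>\<infinity>i. f i x) \<partial>M) = (\<Sum>\<^sub>\<infinity>i. \<integral>\<^sup>+x. f i x \<partial>M)"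
proof -
  have "(\<integral>\<^sup>+x. (\<Sum>\<^sub>\<infinity>i. f i x) \<partial>M) =
     (\<integral>\<^sup>+x. (\<Sum>k. if k \<in> range (to_nat :: 'i \<Rightarrow> nat) then f (from_nat k) x else 0) \<partial>M)"
    by (subst infsum_countable_as_suminf) simp
  also have "\<dots> = (\<Sum>k. \<integral>\<^sup>+x. (if k \<in> range (to_nat :: 'i \<Rightarrow> nat) then f (from_nat k) x else 0) \<partial>M)"
    by (rule nn_integral_suminf) simp
  also have "\<dots> = (\<Sum>k. if k \<in> range (to_nat :: 'i \<Rightarrow> nat) then \<integral>\<^sup>+x. f (from_nat k) x \<partial>M else 0)"
    by (intro suminf_cong) auto
  also have "\<dots> = (\<Sum>\<^sub>\<infinity>i. \<integral>\<^sup>+x. f i x \<partial>M)"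
    by (subst infsum_countable_as_suminf) simp
  finally show ?thesis .
qed

lemma ennsum[simp]: "(G::_ \<Rightarrow> ennreal) summable_on A"
  by (simp add: nonneg_summable_on_complete)

lemma unitvec_nth: "(x + t *\<^sub>R unitvec j) $ i = x $ i + (if i = j then t else 0)"
  by (simp add: unitvec_def axis_def)

lemma unitvec_nth2[simp]: "unitvec j $ i = (if i = j then 1 else 0)"
  by (simp add: unitvec_def axis_def)

lemma partial_DERIV:
  assumes "\<And>x. has_partial j g x"
  shows "((\<lambda>t. g (x + t *\<^sub>R unitvec j)) has_real_derivative partial j g (x + t *\<^sub>R unitvec j)) (at t)"
proof -
  let ?y = "x + t *\<^sub>R unitvec j"
  have "(\<lambda>\<tau>. g (?y + \<tau> *\<^sub>R unitvec j)) differentiable (at 0)"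
    using assms[of ?y] by (simp add: has_partial_def)
  then have "((\<lambda>\<tau>. g (?y + \<tau> *\<^sub>R unitvec j)) has_real_derivative partial j g ?y) (at 0)"
    by (simp add: partial_def DERIV_deriv_iff_real_differentiable)
  moreover have "(\<lambda>\<tau>. g (?y + \<tau> *\<^sub>R unitvec j)) = (\<lambda>\<tau>. g (x + (\<tau> + t) *\<^sub>R unitvec j))"
    by (simp add: algebra_simps scaleR_add_left)
  ultimately have "((\<lambda>\<tau>. g (x + (\<tau> + t) *\<^sub>R unitvec j)) has_real_derivative partial j g ?y) (at 0)"
    by simp
  then show ?thesis
    using DERIV_shift[of "\<lambda>t. g (x + t *\<^sub>R unitvec j)" "partial j g ?y" 0 t] by simp
qed

lemma partial_mvt:
  assumes "\<And>x. has_partial j g x" and "a > 0"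
  shows "\<exists>\<xi>. 0 < \<xi> \<and> \<xi> < a \<and> g (x + a *\<^sub>R unitvec j) - g x = a * partial j g (x + \<xi> *\<^sub>R unitvec j)"
proof -
  have "\<And>t. 0 \<le> t \<Longrightarrow> t \<le> a \<Longrightarrow> ((\<lambda>t. g (x + t *\<^sub>R unitvec j)) has_real_derivative partial j g (x + t *\<^sub>R unitvec j)) (at t)"
    using partial_DERIV[OF assms(1)] by blast
  from MVT2[OF assms(2) this] obtain z where "0 < z" "z < a"
    "g (x + a *\<^sub>R unitvec j) - g (x + 0 *\<^sub>R unitvec j) = (a - 0) * partial j g (x + z *\<^sub>R unitvec j)"
    by blast
  then show ?thesis by auto
qed

lemma partial_mvt_abs:
  assumes "\<And>x. has_partial j g x"
    and "\<And>\<xi>. min 0 a \<le> \<xi> \<Longrightarrow> \<xi> \<le> max 0 a \<Longrightarrow> \<bar>partial j g (x + \<xi> *\<^sub>R unitvec j)\<bar> \<le> B"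
  shows "\<bar>g (x + a *\<^sub>R unitvec j) - g x\<bar> \<le> \<bar>a\<bar> * B"
proof (cases a "0::real" rule: linorder_cases)
  case equal then show ?thesis by simp
next
  case greater
  from partial_mvt[OF assms(1) greater, of x] obtain \<xi> where
    "0 < \<xi>" "\<xi> < a" "g (x + a *\<^sub>R unitvec j) - g x = a * partial j g (x + \<xi> *\<^sub>R unitvec j)" by blast
  moreover have "\<bar>partial j g (x + \<xi> *\<^sub>R unitvec j)\<bar> \<le> B"
    using assms(2)[of \<xi>] greater calculation by auto
  ultimately show ?thesis using greater by (simp add: abs_mult mult_left_mono)
next
  case less
  let ?x = "x + a *\<^sub>R unitvec j"
  from partial_mvt[OF assms(1), of "-a" ?x] less obtain \<xi> where
    xi: "0 < \<xi>" "\<xi> < -a" and eq0: "g (?x + (-a) *\<^sub>R unitvec j) - g ?x = (-a) * partial j g (?x + \<xi> *\<^sub>R unitvec j)" by auto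
  have e1: "?x + (-a) *\<^sub>R unitvec j = x" by simp
  have e2: "?x + \<xi> *\<^sub>R unitvec j = x + (a + \<xi>) *\<^sub>R unitvec j"
    by (simp add: algebra_simps scaleR_add_left)
  have bB: "\<bar>partial j g (x + (a + \<xi>) *\<^sub>R unitvec j)\<bar> \<le> B"
    using assms(2)[of "a + \<xi>"] less xi by auto
  have eq: "g x - g ?x = (-a) * partial j g (x + (a + \<xi>) *\<^sub>R unitvec j)"
    using eq0 unfolding e1 e2 .
  from eq have "\<bar>g ?x - g x\<bar> = \<bar>a\<bar> * \<bar>partial j g (x + (a + \<xi>) *\<^sub>R unitvec j)\<bar>"
    by (metis abs_minus abs_minus_commute abs_mult)
  also have "\<dots> \<le> \<bar>a\<bar> * B" using bB by (simp add: mult_left_mono)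
  finally show ?thesis .
qed

lemma lip_box:
  fixes g :: "real^'n::finite \<Rightarrow> real"
  assumes hp: "\<And>j x. has_partial j g x"
    and bd: "\<And>j x. x \<in> cbox l u \<Longrightarrow> \<bar>partial j g x\<bar> \<le> B"
    and y: "y \<in> cbox l u" and z: "z \<in> cbox l u"
  shows "\<bar>g y - g z\<bar> \<le> (\<Sum>j\<in>UNIV. \<bar>y$j - z$j\<bar>) * B"
proof -
  define w where "w S = (\<chi> i. if i \<in> S then y$i else z$i)" for S
  have yz: "l$i \<le> y$i" "y$i \<le> u$i" "l$i \<le> z$i" "z$i \<le> u$i" for i
    using y z by (auto simp: mem_box_cart)
  have "\<bar>g (w S) - g z\<bar> \<le> (\<Sum>j\<in>S. \<bar>y$j - z$j\<bar>) * B" for S :: "'n set"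
  proof -
    have "finite S" by simp
    then show ?thesis
    proof (induction S rule: finite_induct)
      case empty
      have "w {} = z" by (simp add: w_def vec_eq_iff)
      then show ?case by simp
    next
      case (insert j S)
      have wi: "w (insert j S) = w S + (y$j - z$j) *\<^sub>R unitvec j"
        using insert.hyps by (auto simp: w_def vec_eq_iff)
      have "\<bar>g (w S + (y$j - z$j) *\<^sub>R unitvec j) - g (w S)\<bar> \<le> \<bar>y$j - z$j\<bar> * B"
      proof (rule partial_mvt_abs[OF hp])
        fix \<xi> :: real assume a: "min 0 (y$j - z$j) \<le> \<xi>" "\<xi> \<le> max 0 (y$j - z$j)"
        have "w S + \<xi> *\<^sub>R unitvec j \<in> cbox l u"
          unfolding mem_box_cart
        proof
          fix i
          show "l$i \<le> (w S + \<xi> *\<^sub>R unitvec j)$i \<and> (w S + \<xi> *\<^sub>R unitvec j)$i \<le> u$i"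
          proof (cases "i = j")
            case True
            then show ?thesis using insert.hyps a yz[of j]
              by (auto simp: w_def unitvec_nth)
          next
            case False
            then show ?thesis using yz[of i] by (auto simp: w_def unitvec_nth)
          qed
        qed
        then show "\<bar>partial j g (w S + \<xi> *\<^sub>R unitvec j)\<bar> \<le> B" by (rule bd)
      qed
      then have "\<bar>g (w (insert j S)) - g (w S)\<bar> \<le> \<bar>y$j - z$j\<bar> * B" by (simp add: wi)
      then show ?case using insert.IH insert.hyps
        by (simp add: distrib_right)
    qed
  qed
  from this[of UNIV] show ?thesis by (simp add: w_def)
qed

lemma two_powr_neg: "(2::real) powr (- real n) = 1 / 2^n"
  by (simp add: powr_minus powr_realpow divide_inverse)

lemma mem_cube:
  "x \<in> cube n \<alpha> \<longleftrightarrow> (\<forall>k. real_of_int (\<alpha>$k) / 2^n \<le> x$k \<and> x$k \<le> (real_of_int (\<alpha>$k) + 1) / 2^n)"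
proof
  assume "x \<in> cube n \<alpha>"
  then obtain y where y: "\<forall>j. y $ j \<in> {-1/2..1/2}" and x: "x = xpt n \<alpha> + (1/2^n) *\<^sub>R y"
    by (auto simp: cube_def two_powr_neg)
  show "\<forall>k. real_of_int (\<alpha>$k) / 2^n \<le> x$k \<and> x$k \<le> (real_of_int (\<alpha>$k) + 1) / 2^n"
  proof
    fix k
    have "-1/2 \<le> y$k" "y$k \<le> 1/2" using y by auto
    moreover have "x$k = (real_of_int (\<alpha>$k) + 1/2 + y$k) / 2^n"
      by (simp add: x xpt_def two_powr_neg of_intvec_def add_divide_distrib)
    ultimately show "real_of_int (\<alpha>$k) / 2^n \<le> x$k \<and> x$k \<le> (real_of_int (\<alpha>$k) + 1) / 2^n"
      by (simp add: divide_right_mono)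
  qed
next
  assume a: "\<forall>k. real_of_int (\<alpha>$k) / 2^n \<le> x$k \<and> x$k \<le> (real_of_int (\<alpha>$k) + 1) / 2^n"
  define y where "y = (\<chi> k. 2^n * x$k - real_of_int (\<alpha>$k) - 1/2)"
  have "\<forall>j. y $ j \<in> {-1/2..1/2}"
  proof
    fix j
    have "real_of_int (\<alpha>$j) \<le> 2^n * x$j" "2^n * x$j \<le> real_of_int (\<alpha>$j) + 1"
      using a[rule_format, of j] by (auto simp: field_simps)
    then show "y $ j \<in> {-1/2..1/2}" by (simp add: y_def)
  qed
  moreover have "x = xpt n \<alpha> + (1/2^n) *\<^sub>R y"
    by (simp add: vec_eq_iff xpt_def two_powr_neg of_intvec_def y_def field_simps)
  ultimately show "x \<in> cube n \<alpha>"
    unfolding cube_def two_powr_neg by blast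
qed

definition lo :: "nat \<Rightarrow> int^'n::finite \<Rightarrow> real^'n" where
  "lo n \<alpha> = (\<chi> k. real_of_int (\<alpha>$k) / 2^n)"

definition wd :: "nat \<Rightarrow> real^'n::finite" where
  "wd n = (\<chi> k. 1 / 2^n)"

lemma cube_cbox: "cube n \<alpha> = cbox (lo n \<alpha>) (lo n \<alpha> + wd n)"
  by (auto simp: mem_cube mem_box_cart lo_def wd_def add_divide_distrib)

lemma C2_facts:
  assumes "C2 f"
  shows "continuous_on UNIV f" "\<And>j x. has_partial j f x" "\<And>j. continuous_on UNIV (partial j f)"
    "\<And>j k x. has_partial j (partial k f) x" "\<And>j k. continuous_on UNIV (partial j (partial k f))"
  using assms by (auto simp: C2_def)

lemma hessF_cont:
  assumes "C2 f" shows "continuous_on UNIV (hessF f)"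
  unfolding hessF_def[abs_def]
  using C2_facts(5)[OF assms] by (intro continuous_intros) auto

lemma hessF_nonneg: "hessF f x \<ge> 0"
  by (simp add: hessF_def sum_nonneg)

lemma partial_le_hessF: "\<bar>partial j (partial k f) x\<bar> \<le> hessF f x"
proof -
  have "(partial j (partial k f) x)\<^sup>2 \<le> (\<Sum>k\<in>UNIV. (partial j (partial k f) x)\<^sup>2)"
    by (rule member_le_sum) auto
  also have "\<dots> \<le> (\<Sum>j\<in>UNIV. \<Sum>k\<in>UNIV. (partial j (partial k f) x)\<^sup>2)"
    by (rule member_le_sum[where f = "\<lambda>j. \<Sum>k\<in>UNIV. (partial j (partial k f) x)\<^sup>2"]) (auto intro: sum_nonneg)
  finally show ?thesis unfolding hessF_def
    by (metis real_sqrt_abs real_sqrt_le_mono)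
qed

definition Mc :: "(real^'n::finite \<Rightarrow> real) \<Rightarrow> nat \<Rightarrow> int^'n \<Rightarrow> real" where
  "Mc f n \<alpha> = (SUP x\<in>cube n \<alpha>. hessF f x)"

lemma cube_compact: "compact (cube n \<alpha>)"
  by (simp add: cube_cbox)

lemma cube_ne: "lo n \<alpha> \<in> cube n \<alpha>"
  by (simp add: cube_cbox mem_box_cart lo_def wd_def)

lemma hessF_le_Mc:
  assumes "C2 f" "x \<in> cube n \<alpha>"
  shows "hessF f x \<le> Mc f n \<alpha>"
proof -
  have "compact (hessF f ` cube n \<alpha>)"
    by (rule compact_continuous_image[OF continuous_on_subset[OF hessF_cont[OF assms(1)]] cube_compact]) simp
  then have "bdd_above (hessF f ` cube n \<alpha>)"
    by (simp add: bounded_imp_bdd_above compact_imp_bounded)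
  then show ?thesis unfolding Mc_def using assms(2) by (rule cSUP_upper2) simp
qed

lemma Mc_nonneg: assumes "C2 f" shows "Mc f n \<alpha> \<ge> 0"
  using hessF_le_Mc[OF assms cube_ne] hessF_nonneg[of f] by (meson order_trans)

lemma cube_lip:
  fixes f :: "real^'n::finite \<Rightarrow> real"
  assumes "C2 f" "y \<in> cube n \<alpha>" "z \<in> cube n \<alpha>"
  shows "\<bar>partial k f y - partial k f z\<bar> \<le> real CARD('n) * (1/2^n) * Mc f n \<alpha>"
proof -
  have "\<bar>partial k f y - partial k f z\<bar> \<le> (\<Sum>j\<in>UNIV. \<bar>y$j - z$j\<bar>) * Mc f n \<alpha>"
  proof (rule lip_box[where l = "lo n \<alpha>" and u = "lo n \<alpha> + wd n"])
    show "has_partial j (partial k f) x" for j x using C2_facts(4)[OF assms(1)] .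
    show "\<bar>partial j (partial k f) x\<bar> \<le> Mc f n \<alpha>" if "x \<in> cbox (lo n \<alpha>) (lo n \<alpha> + wd n)" for j x
      using partial_le_hessF[of j k f x] hessF_le_Mc[OF assms(1), of x n \<alpha>] that
      by (simp add: cube_cbox)
  qed (use assms in \<open>simp_all add: cube_cbox\<close>)
  also have "\<dots> \<le> (\<Sum>j\<in>(UNIV::'n set). 1/2^n) * Mc f n \<alpha>"
  proof -
    have "\<bar>y$j - z$j\<bar> \<le> 1/2^n" for j
      using assms(2,3) by (auto simp: mem_cube[of y] mem_cube[of z] add_divide_distrib abs_le_iff
           dest!: spec[of _ j])
    then have "(\<Sum>j\<in>UNIV. \<bar>y$j - z$j\<bar>) \<le> (\<Sum>j\<in>(UNIV::'n set). 1/2^n)"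
      by (intro sum_mono) auto
    then show ?thesis by (rule mult_right_mono) (rule Mc_nonneg[OF assms(1)])
  qed
  finally show ?thesis by simp
qed

lemma integral_box_bound:
  fixes g :: "real^'n::finite \<Rightarrow> real"
  assumes cont: "continuous_on (cbox a b) g" and bd: "\<And>t. t \<in> cbox a b \<Longrightarrow> \<bar>g t - v\<bar> \<le> B"
  shows "\<bar>(\<integral>t. indicator (cbox a b) t * g t \<partial>lborel) - measure lborel (cbox a b) * v\<bar> \<le> measure lborel (cbox a b) * B"
proof -
  let ?S = "cbox a b"
  have i1: "integrable lborel (\<lambda>t. indicator ?S t * g t)"
    using borel_integrable_compact[OF compact_cbox cont] by simp
  have ic: "integrable lborel (\<lambda>t. indicator ?S t * c)" for c :: real
    using borel_integrable_compact[OF compact_cbox continuous_on_const[of ?S c]] by simp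
  have vc: "(\<integral>t. indicator ?S t * c \<partial>lborel) = measure lborel ?S * c" for c :: real
    by simp
  have "(\<integral>t. indicator ?S t * (v - B) \<partial>lborel) \<le> (\<integral>t. indicator ?S t * g t \<partial>lborel)"
    by (rule integral_mono[OF ic i1]) (use bd in \<open>force simp: indicator_def abs_le_iff\<close>)
  moreover have "(\<integral>t. indicator ?S t * g t \<partial>lborel) \<le> (\<integral>t. indicator ?S t * (v + B) \<partial>lborel)"
    by (rule integral_mono[OF i1 ic]) (use bd in \<open>force simp: indicator_def abs_le_iff\<close>)
  ultimately show ?thesis unfolding vc by (simp add: abs_le_iff algebra_simps)
qed

lemma psi_eps_split:
  fixes u :: "real^'n::finite"
  shows "psi (eps j) u = indicator {u. \<forall>k. 0 \<le> u$k \<and> u$k \<le> (if k = j then 1/2 else 1)} u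
     - indicator {u. \<forall>k. (if k = j then 1/2 else 0) \<le> u$k \<and> u$k \<le> 1} u"
proof -
  let ?P = "\<forall>k\<in>UNIV-{j}. 0 \<le> u$k \<and> u$k \<le> 1"
  have "psi (eps j) u = (\<Prod>k\<in>UNIV. (if eps j k then psi1 else psi0) (u$k))"
    by (simp add: psi_def)
  also have "\<dots> = psi1 (u$j) * (\<Prod>k\<in>UNIV-{j}. (if eps j k then psi1 else psi0) (u$k))"
    by (subst prod.remove[of UNIV j]) (auto simp: eps_def)
  also have "(\<Prod>k\<in>UNIV-{j}. (if eps j k then psi1 else psi0) (u$k)) = (\<Prod>k\<in>UNIV-{j}. psi0 (u$k))"
    by (intro prod.cong) (auto simp: eps_def)
  also have "(\<Prod>k\<in>UNIV-{j}. psi0 (u$k)) = (if ?P then 1 else 0)"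
  proof (cases ?P)
    case True
    then have "(\<Prod>k\<in>UNIV-{j}. psi0 (u$k)) = (\<Prod>k\<in>UNIV-{j}. 1)"
      by (intro prod.cong) (auto simp: psi0_def)
    then show ?thesis using True by simp
  next
    case False
    then obtain k where "k \<noteq> j" "\<not> (0 \<le> u$k \<and> u$k \<le> 1)" by auto
    then have "psi0 (u$k) = 0" by (auto simp: psi0_def)
    then have "(\<Prod>k\<in>UNIV-{j}. psi0 (u$k)) = 0"
      using \<open>k \<noteq> j\<close> by (intro prod_zero) auto
    then show ?thesis using False by (subst if_not_P) assumption+
  qed
  finally have e: "psi (eps j) u = psi1 (u$j) * (if ?P then 1 else 0)" .
  have i1: "indicator {u. \<forall>k. 0 \<le> u$k \<and> u$k \<le> (if k = j then 1/2 else 1)} u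
      = (if ?P \<and> 0 \<le> u$j \<and> u$j \<le> 1/2 then 1 else (0::real))"
    by (auto simp: indicator_def split: if_splits)
  have i2: "indicator {u. \<forall>k. (if k = j then 1/2 else 0) \<le> u$k \<and> u$k \<le> 1} u
      = (if ?P \<and> 1/2 \<le> u$j \<and> u$j \<le> 1 then 1 else (0::real))"
    by (auto simp: indicator_def split: if_splits)
  show ?thesis unfolding e i1 i2 by (auto simp: psi1_def indicator_def)
qed

definition QA :: "nat \<Rightarrow> int^'n::finite \<Rightarrow> 'n \<Rightarrow> (real^'n) set" where
  "QA n \<alpha> j = cbox (lo n \<alpha>) (\<chi> k. (real_of_int (\<alpha>$k) + (if k = j then 1/2 else 1)) / 2^n)"

definition QB :: "nat \<Rightarrow> int^'n::finite \<Rightarrow> 'n \<Rightarrow> (real^'n) set" where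
  "QB n \<alpha> j = cbox (\<chi> k. (real_of_int (\<alpha>$k) + (if k = j then 1/2 else 0)) / 2^n)
                    (\<chi> k. (real_of_int (\<alpha>$k) + 1) / 2^n)"

definition sh :: "nat \<Rightarrow> 'n::finite \<Rightarrow> real^'n" where
  "sh n j = (1 / 2^(Suc n)) *\<^sub>R unitvec j"

lemma aux_le1: "(0::real) < p \<Longrightarrow> (b \<le> p * x - a) \<longleftrightarrow> (a + b) / p \<le> x"
  by (simp add: field_simps)
lemma aux_le2: "(0::real) < p \<Longrightarrow> (p * x - a \<le> b) \<longleftrightarrow> x \<le> (a + b) / p"
  by (simp add: field_simps)

lemma psi_QAB:
  fixes t :: "real^'n::finite"
  shows "psi (eps j) ((2::real)^n *\<^sub>R t - of_intvec \<alpha>) = indicator (QA n \<alpha> j) t - indicator (QB n \<alpha> j) t"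
proof -
  have p: "(0::real) < 2^n" by simp
  have A: "((2::real)^n *\<^sub>R t - of_intvec \<alpha>) \<in> {u. \<forall>k. 0 \<le> u$k \<and> u$k \<le> (if k = j then 1/2 else 1)}
     \<longleftrightarrow> t \<in> QA n \<alpha> j"
    by (simp add: QA_def lo_def mem_box_cart of_intvec_def aux_le1[OF p] aux_le2[OF p])
  have B: "((2::real)^n *\<^sub>R t - of_intvec \<alpha>) \<in> {u. \<forall>k. (if k = j then 1/2 else 0) \<le> u$k \<and> u$k \<le> 1}
     \<longleftrightarrow> t \<in> QB n \<alpha> j"
    by (simp add: QB_def mem_box_cart of_intvec_def aux_le1[OF p] aux_le2[OF p])
  show ?thesis unfolding psi_eps_split indicator_def using A B by simp
qed

lemma QB_shift: "t + sh n j \<in> QB n \<alpha> j \<longleftrightarrow> t \<in> QA n \<alpha> j"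
proof -
  have "(real_of_int (\<alpha>$k) + 1/2) / 2^n \<le> x + 1 / 2^Suc n \<longleftrightarrow> real_of_int (\<alpha>$k) / 2^n \<le> x" for k x
    by (simp add: field_simps)
  moreover have "x + 1 / 2^Suc n \<le> (real_of_int (\<alpha>$k) + 1) / 2^n \<longleftrightarrow> x \<le> (real_of_int (\<alpha>$k) + 1/2) / 2^n" for k x
  proof -
    have "(real_of_int (\<alpha>$k) + 1) / 2^n = (real_of_int (\<alpha>$k) + 1/2) / 2^n + 1 / 2^Suc n"
      by (simp add: field_simps)
    then show ?thesis by linarith
  qed
  ultimately show ?thesis
    by (auto simp: QA_def QB_def lo_def sh_def mem_box_cart)
qed

lemma dhat_formula:
  fixes f :: "real^'n::finite \<Rightarrow> real"
  assumes "C2 f"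
  shows "dhat n \<alpha> f $ j = 4 * 2^n * (\<integral>t. indicator (QA n \<alpha> j) t * (f (t + sh n j) - f t) \<partial>lborel)"
proof -
  have fc: "continuous_on UNIV f" using C2_facts(1)[OF assms] .
  then have fm[measurable]: "f \<in> borel_measurable borel"
    by (simp add: borel_measurable_continuous_onI)
  have QAc: "compact (QA n \<alpha> j)" by (simp add: QA_def)
  have QBc: "compact (QB n \<alpha> j)" by (simp add: QB_def)
  have QBm[measurable]: "QB n \<alpha> j \<in> sets borel" by (simp add: QB_def)
  have iA: "integrable lborel (\<lambda>t. indicator (QA n \<alpha> j) t * f t)"
    using borel_integrable_compact[OF QAc continuous_on_subset[OF fc]] by simp
  have iB: "integrable lborel (\<lambda>t. indicator (QB n \<alpha> j) t * f t)"
    using borel_integrable_compact[OF QBc continuous_on_subset[OF fc]] by simp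
  have fsc: "continuous_on UNIV (\<lambda>t. f (t + sh n j))"
    by (rule continuous_on_compose2[OF fc]) (auto intro!: continuous_intros)
  have iA2: "integrable lborel (\<lambda>t. indicator (QA n \<alpha> j) t * f (t + sh n j))"
    using borel_integrable_compact[OF QAc continuous_on_subset[OF fsc]] by simp
  have shift: "(\<integral>t. indicator (QB n \<alpha> j) t * f t \<partial>lborel) = (\<integral>t. indicator (QA n \<alpha> j) t * f (t + sh n j) \<partial>lborel)"
  proof -
    have "(\<integral>t. indicator (QB n \<alpha> j) t * f t \<partial>lborel)
        = (\<integral>t. indicator (QB n \<alpha> j) t * f t \<partial>(distr lborel borel ((+) (sh n j))))"
      by (simp add: lborel_distr_plus)
    also have "\<dots> = (\<integral>t. indicator (QB n \<alpha> j) (sh n j + t) * f (sh n j + t) \<partial>lborel)"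
      by (rule integral_distr) auto
    also have "\<dots> = (\<integral>t. indicator (QA n \<alpha> j) t * f (t + sh n j) \<partial>lborel)"
      by (intro Bochner_Integration.integral_cong refl)
         (simp add: indicator_def QB_shift add.commute)
    finally show ?thesis .
  qed
  have I: "(\<integral>t. f t * psi (eps j) ((2::real)^n *\<^sub>R t - of_intvec \<alpha>) \<partial>lborel)
      = - (\<integral>t. indicator (QA n \<alpha> j) t * (f (t + sh n j) - f t) \<partial>lborel)"
  proof -
    have "(\<integral>t. f t * psi (eps j) ((2::real)^n *\<^sub>R t - of_intvec \<alpha>) \<partial>lborel)
        = (\<integral>t. indicator (QA n \<alpha> j) t * f t - indicator (QB n \<alpha> j) t * f t \<partial>lborel)"
      by (intro Bochner_Integration.integral_cong refl) (simp add: psi_QAB algebra_simps)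
    also have "\<dots> = (\<integral>t. indicator (QA n \<alpha> j) t * f t \<partial>lborel) - (\<integral>t. indicator (QB n \<alpha> j) t * f t \<partial>lborel)"
      by (rule Bochner_Integration.integral_diff[OF iA iB])
    also have "\<dots> = (\<integral>t. indicator (QA n \<alpha> j) t * f t \<partial>lborel) - (\<integral>t. indicator (QA n \<alpha> j) t * f (t + sh n j) \<partial>lborel)"
      by (simp add: shift)
    also have "\<dots> = - (\<integral>t. indicator (QA n \<alpha> j) t * f (t + sh n j) - indicator (QA n \<alpha> j) t * f t \<partial>lborel)"
      by (simp add: Bochner_Integration.integral_diff[OF iA2 iA])
    finally show ?thesis by (simp add: algebra_simps)
  qed
  have pw: "(2::real) powr (real n * (1 - real CARD('n) / 2) + 2) * 2 powr (real n * real CARD('n) / 2) = 4 * 2^n"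
  proof -
    have "(2::real) powr (real n * (1 - real CARD('n) / 2) + 2) * 2 powr (real n * real CARD('n) / 2)
        = 2 powr (real n * (1 - real CARD('n) / 2) + 2 + real n * real CARD('n) / 2)"
      by (simp add: powr_add)
    also have "real n * (1 - real CARD('n) / 2) + 2 + real n * real CARD('n) / 2 = real (n + 2)"
      by (simp add: algebra_simps)
    also have "(2::real) powr real (n + 2) = 2^(n+2)" by (rule powr_realpow) simp
    finally show ?thesis by simp
  qed
  show ?thesis
    unfolding dhat_def dcoef_def
    using pw by (simp add: I)
qed

lemma QA_shift_cube:
  assumes "t \<in> QA n \<alpha> j" "0 \<le> \<xi>" "\<xi> \<le> 1 / 2^Suc n"
  shows "t + \<xi> *\<^sub>R unitvec j \<in> cube n \<alpha>"
proof -
  have "(real_of_int (\<alpha>$j) + 1/2) / 2^n + 1 / 2^Suc n = (real_of_int (\<alpha>$j) + 1) / 2^n"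
    by (simp add: field_simps)
  moreover have "(real_of_int (\<alpha>$k) + 1/2) / 2^n \<le> (real_of_int (\<alpha>$k) + 1) / 2^n" for k
    by (simp add: divide_right_mono)
  ultimately show ?thesis using assms
    unfolding mem_cube QA_def mem_box_cart lo_def
    by (auto simp: unitvec_nth) (smt (verit))+
qed

lemma QA_sub_cube: "t \<in> QA n \<alpha> j \<Longrightarrow> t \<in> cube n \<alpha>"
  using QA_shift_cube[of t n \<alpha> j 0] by simp

lemma measure_QA:
  "measure lborel (QA n \<alpha> (j::'n::finite)) = (1/2^n)^CARD('n) / 2"
proof -
  have "lo n \<alpha> \<in> QA n \<alpha> j"
    by (simp add: QA_def mem_box_cart lo_def divide_right_mono)
  then have ne: "QA n \<alpha> j \<noteq> {}" by auto
  have "measure lborel (QA n \<alpha> j) = (\<Prod>k\<in>UNIV. (real_of_int (\<alpha>$k) + (if k = j then 1/2 else 1)) / 2^n - real_of_int (\<alpha>$k) / 2^n)"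
    using content_cbox_cart[OF ne[unfolded QA_def]] by (simp add: QA_def lo_def)
  also have "\<dots> = (\<Prod>k\<in>(UNIV::'n set). (1/2^n) * (if k = j then 1/2 else 1))"
    by (intro prod.cong refl) (simp add: field_simps)
  also have "\<dots> = (1/2^n)^CARD('n) * (\<Prod>k\<in>(UNIV::'n set). (if k = j then 1/2 else 1))"
    unfolding prod.distrib by simp
  also have "(\<Prod>k\<in>(UNIV::'n set). (if k = j then 1/2 else 1)) = (1/2::real)"
    by (simp add: prod.delta)
  finally show ?thesis by simp
qed

lemma dhat_approx:
  fixes f :: "real^'n::finite \<Rightarrow> real"
  assumes C: "C2 f"
  shows "\<bar>dhat n \<alpha> f $ j - (1/2^n)^CARD('n) * partial j f (lo n \<alpha>)\<bar>
          \<le> real CARD('n) * (1/2^n)^(Suc CARD('n)) * Mc f n \<alpha>"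
proof -
  define a :: real where "a = 1 / 2^Suc n"
  define M where "M = Mc f n \<alpha>"
  define S where "S = real CARD('n)"
  define v where "v = a * partial j f (lo n \<alpha>)"
  define B where "B = a * (S * (1/2^n) * M)"
  define m where "m = measure lborel (QA n \<alpha> j)"
  have a_pos: "a > 0" by (simp add: a_def)
  have shv: "sh n j = a *\<^sub>R unitvec j" by (simp add: sh_def a_def)
  have fc: "continuous_on UNIV f" using C2_facts(1)[OF C] .
  have gc: "continuous_on (QA n \<alpha> j) (\<lambda>t. f (t + sh n j) - f t)"
    by (intro continuous_intros continuous_on_compose2[OF fc] continuous_on_subset[OF fc]) auto
  have bd: "\<bar>(f (t + sh n j) - f t) - v\<bar> \<le> B" if t: "t \<in> QA n \<alpha> j" for t
  proof -
    obtain \<xi> where xi: "0 < \<xi>" "\<xi> < a" and eq: "f (t + a *\<^sub>R unitvec j) - f t = a * partial j f (t + \<xi> *\<^sub>R unitvec j)"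
      using partial_mvt[OF C2_facts(2)[OF C] a_pos] by blast
    have p: "t + \<xi> *\<^sub>R unitvec j \<in> cube n \<alpha>"
      using QA_shift_cube[OF t, of \<xi>] xi by (simp add: a_def)
    have "\<bar>partial j f (t + \<xi> *\<^sub>R unitvec j) - partial j f (lo n \<alpha>)\<bar> \<le> S * (1/2^n) * M"
      using cube_lip[OF C p cube_ne] by (simp add: S_def M_def)
    then have "a * \<bar>partial j f (t + \<xi> *\<^sub>R unitvec j) - partial j f (lo n \<alpha>)\<bar> \<le> B"
      unfolding B_def using a_pos by (intro mult_left_mono) auto
    then show ?thesis
      by (simp add: shv eq v_def abs_mult a_pos right_diff_distrib[symmetric] abs_of_pos)
  qed
  have ib: "\<bar>(\<integral>t. indicator (QA n \<alpha> j) t * (f (t + sh n j) - f t) \<partial>lborel) - m * v\<bar> \<le> m * B"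
    unfolding m_def QA_def
    by (rule integral_box_bound) (use gc bd in \<open>simp_all add: QA_def\<close>)
  have mval: "m = (1/2^n)^CARD('n) / 2" by (simp add: m_def measure_QA)
  have e1: "4 * 2^n * (m * v) = (1/2^n)^CARD('n) * partial j f (lo n \<alpha>)"
    by (simp add: mval v_def a_def field_simps)
  have e2: "4 * 2^n * (m * B) = S * (1/2^n)^(Suc CARD('n)) * M"
    by (simp add: mval B_def a_def field_simps)
  have "\<bar>dhat n \<alpha> f $ j - 4 * 2^n * (m * v)\<bar> \<le> 4 * 2^n * (m * B)"
  proof -
    have "\<bar>dhat n \<alpha> f $ j - 4 * 2^n * (m * v)\<bar>
         = 4 * 2^n * \<bar>(\<integral>t. indicator (QA n \<alpha> j) t * (f (t + sh n j) - f t) \<partial>lborel) - m * v\<bar>"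
      by (simp add: dhat_formula[OF C] abs_mult right_diff_distrib[symmetric])
    also have "\<dots> \<le> 4 * 2^n * (m * B)"
      by (rule mult_left_mono[OF ib]) simp
    finally show ?thesis .
  qed
  then show ?thesis unfolding e1 e2 by (simp add: S_def M_def)
qed

lemma grad_lip:
  fixes f :: "real^'n::finite \<Rightarrow> real"
  assumes C: "C2 f" and t: "t \<in> cube n \<alpha>"
  shows "norm (grad f t - grad f (lo n \<alpha>)) \<le> real CARD('n) * (real CARD('n) * (1/2^n) * Mc f n \<alpha>)"
proof -
  have "norm (grad f t - grad f (lo n \<alpha>)) \<le> (\<Sum>k\<in>UNIV. \<bar>(grad f t - grad f (lo n \<alpha>))$k\<bar>)"
    by (rule norm_le_l1_cart)
  also have "\<dots> \<le> (\<Sum>k\<in>(UNIV::'n set). real CARD('n) * (1/2^n) * Mc f n \<alpha>)"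
  proof (intro sum_mono)
    fix k show "\<bar>(grad f t - grad f (lo n \<alpha>))$k\<bar> \<le> real CARD('n) * (1/2^n) * Mc f n \<alpha>"
      using cube_lip[OF C t cube_ne, of k] by (simp add: grad_def)
  qed
  finally show ?thesis by simp
qed

lemma dhat_norm_approx:
  fixes f :: "real^'n::finite \<Rightarrow> real"
  assumes C: "C2 f"
  shows "\<bar>norm (dhat n \<alpha> f) - (1/2^n)^CARD('n) * norm (grad f (lo n \<alpha>))\<bar>
          \<le> real CARD('n) * (real CARD('n) * (1/2^n)^(Suc CARD('n)) * Mc f n \<alpha>)"
proof -
  have "\<bar>norm (dhat n \<alpha> f) - (1/2^n)^CARD('n) * norm (grad f (lo n \<alpha>))\<bar>
      = \<bar>norm (dhat n \<alpha> f) - norm ((1/2^n)^CARD('n) *\<^sub>R grad f (lo n \<alpha>))\<bar>"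
    by simp
  also have "\<dots> \<le> norm (dhat n \<alpha> f - (1/2^n)^CARD('n) *\<^sub>R grad f (lo n \<alpha>))"
    by (rule norm_triangle_ineq3)
  also have "\<dots> \<le> (\<Sum>j\<in>UNIV. \<bar>(dhat n \<alpha> f - (1/2^n)^CARD('n) *\<^sub>R grad f (lo n \<alpha>))$j\<bar>)"
    by (rule norm_le_l1_cart)
  also have "\<dots> \<le> (\<Sum>j\<in>(UNIV::'n set). real CARD('n) * (1/2^n)^(Suc CARD('n)) * Mc f n \<alpha>)"
  proof (intro sum_mono)
    fix j show "\<bar>(dhat n \<alpha> f - (1/2^n)^CARD('n) *\<^sub>R grad f (lo n \<alpha>))$j\<bar> \<le> real CARD('n) * (1/2^n)^(Suc CARD('n)) * Mc f n \<alpha>"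
      using dhat_approx[OF C, of n \<alpha> j] by (simp add: grad_def)
  qed
  finally show ?thesis by simp
qed

definition HQ :: "nat \<Rightarrow> int^'n::finite \<Rightarrow> (real^'n) set" where
  "HQ n \<alpha> = {t. \<forall>k. real_of_int (\<alpha>$k) / 2^n \<le> t$k \<and> t$k < (real_of_int (\<alpha>$k) + 1) / 2^n}"

lemma HQ_sub: "HQ n \<alpha> \<subseteq> cube n \<alpha>"
  by (auto simp: HQ_def mem_cube less_imp_le)

lemma HQ_borel[measurable]: "HQ n \<alpha> \<in> sets borel"
  unfolding HQ_def by measurable

lemma HQ_measure: "emeasure lborel (HQ n (\<alpha>::int^'n::finite)) = ennreal ((1/2^n)^CARD('n))"
proof -
  have 1: "box (lo n \<alpha>) (lo n \<alpha> + wd n) \<subseteq> HQ n \<alpha>"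
    by (auto simp: HQ_def mem_box_cart lo_def wd_def add_divide_distrib less_imp_le)
  have 2: "HQ n \<alpha> \<subseteq> cbox (lo n \<alpha>) (lo n \<alpha> + wd n)"
    using HQ_sub cube_cbox by blast
  have pr: "(\<Prod>b\<in>Basis. (lo n \<alpha> + wd n - lo n \<alpha>) \<bullet> b) = (1/2^n)^CARD('n)"
  proof -
    have "(\<Prod>b\<in>Basis. (lo n \<alpha> + wd n - lo n \<alpha>) \<bullet> b) = (\<Prod>b\<in>(Basis::(real^'n) set). 1/2^n)"
      by (intro prod.cong refl) (auto simp: Basis_vec_def wd_def inner_axis)
    also have "\<dots> = (1/2^n)^CARD('n)" by simp
    finally show ?thesis .
  qed
  have le: "\<forall>b\<in>Basis. lo n \<alpha> \<bullet> b \<le> (lo n \<alpha> + wd n) \<bullet> b"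
    by (auto simp: Basis_vec_def wd_def inner_axis)
  have "emeasure lborel (box (lo n \<alpha>) (lo n \<alpha> + wd n)) \<le> emeasure lborel (HQ n \<alpha>)"
    by (rule emeasure_mono[OF 1]) simp
  moreover have "emeasure lborel (HQ n \<alpha>) \<le> emeasure lborel (cbox (lo n \<alpha>) (lo n \<alpha> + wd n))"
    by (rule emeasure_mono[OF 2]) simp
  ultimately show ?thesis
    unfolding emeasure_lborel_box_eq emeasure_lborel_cbox_eq using le pr
    by (simp add: antisym)
qed

lemma grad_cont:
  assumes "C2 f" shows "continuous_on UNIV (grad f)"
  unfolding grad_def[abs_def]
  using C2_facts(3)[OF assms] by (intro continuous_on_vec_lambda) auto

lemma grad_meas[measurable]:
  assumes "C2 f" shows "(\<lambda>t. ennreal (norm (grad f t))) \<in> borel_measurable borel"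
proof -
  have "continuous_on UNIV (\<lambda>t. norm (grad f t))"
    using grad_cont[OF assms] by (intro continuous_intros) auto
  then have "(\<lambda>t. norm (grad f t)) \<in> borel_measurable borel"
    by (simp add: borel_measurable_continuous_onI)
  then show ?thesis by measurable
qed

definition Tc :: "(real^'n::finite \<Rightarrow> real) \<Rightarrow> nat \<Rightarrow> int^'n \<Rightarrow> ennreal" where
  "Tc f n \<alpha> = (\<integral>\<^sup>+t. ennreal (norm (grad f t)) * indicator (HQ n \<alpha>) t \<partial>lborel)"

definition Ec :: "(real^'n::finite \<Rightarrow> real) \<Rightarrow> nat \<Rightarrow> int^'n \<Rightarrow> real" where
  "Ec f n \<alpha> = 2 * (real CARD('n) * (real CARD('n) * (1/2^n)^(Suc CARD('n)) * Mc f n \<alpha>))"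

lemma cube_est:
  fixes f :: "real^'n::finite \<Rightarrow> real"
  assumes C: "C2 f"
  shows "ennreal (norm (dhat n \<alpha> f)) \<le> Tc f n \<alpha> + ennreal (Ec f n \<alpha>)"
    and "Tc f n \<alpha> \<le> ennreal (norm (dhat n \<alpha> f)) + ennreal (Ec f n \<alpha>)"
proof -
  define S where "S = real CARD('n)"
  define h :: real where "h = 1/2^n"
  define M where "M = Mc f n \<alpha>"
  define L where "L = norm (grad f (lo n \<alpha>))"
  define g0 where "g0 = S * (S * h * M)"
  define D where "D = S * (S * h^(Suc CARD('n)) * M)"
  have M0: "M \<ge> 0" using Mc_nonneg[OF C] by (simp add: M_def)
  have S0: "S \<ge> 0" by (simp add: S_def)
  have h0: "h > 0" by (simp add: h_def)
  have g00: "g0 \<ge> 0" using M0 S0 h0 by (simp add: g0_def)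
  have D0: "D \<ge> 0" using M0 S0 h0 by (simp add: D_def)
  have HD: "h^CARD('n) * g0 = D" by (simp add: g0_def D_def algebra_simps)
  have Ec: "Ec f n \<alpha> = 2 * D" by (simp add: Ec_def D_def S_def h_def M_def)
  have dn: "\<bar>norm (dhat n \<alpha> f) - h^CARD('n) * L\<bar> \<le> D"
    using dhat_norm_approx[OF C, of n \<alpha>] by (simp add: D_def S_def h_def M_def L_def)
  have gl: "\<bar>norm (grad f t) - L\<bar> \<le> g0" if "t \<in> HQ n \<alpha>" for t
  proof -
    have "\<bar>norm (grad f t) - L\<bar> \<le> norm (grad f t - grad f (lo n \<alpha>))"
      unfolding L_def by (rule norm_triangle_ineq3)
    also have "\<dots> \<le> g0" using grad_lip[OF C, of t n \<alpha>] HQ_sub that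
      by (auto simp: g0_def S_def h_def M_def)
    finally show ?thesis .
  qed
  have meas: "emeasure lborel (HQ n \<alpha>) = ennreal (h^CARD('n))"
    by (simp add: HQ_measure h_def)
  note [measurable] = grad_meas[OF C]
  have T_up: "Tc f n \<alpha> \<le> ennreal (h^CARD('n) * L + D)"
  proof -
    have "Tc f n \<alpha> \<le> (\<integral>\<^sup>+t. ennreal (L + g0) * indicator (HQ n \<alpha>) t \<partial>lborel)"
      unfolding Tc_def
    proof (intro nn_integral_mono)
      fix t
      show "ennreal (norm (grad f t)) * indicator (HQ n \<alpha>) t \<le> ennreal (L + g0) * indicator (HQ n \<alpha>) t"
        using gl[of t] by (auto simp: indicator_def intro!: ennreal_leI)
    qed
    also have "\<dots> = ennreal (L + g0) * ennreal (h^CARD('n))"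
      by (simp add: nn_integral_cmult_indicator meas)
    also have "\<dots> = ennreal ((L + g0) * h^CARD('n))"
      using h0 by (simp add: ennreal_mult'')
    also have "(L + g0) * h^CARD('n) = h^CARD('n) * L + D"
      by (simp add: HD[symmetric] algebra_simps)
    finally show ?thesis .
  qed
  have T_low: "ennreal (h^CARD('n) * L) \<le> Tc f n \<alpha> + ennreal D"
  proof -
    have "ennreal (h^CARD('n) * L) = (\<integral>\<^sup>+t. ennreal L * indicator (HQ n \<alpha>) t \<partial>lborel)"
      using h0 by (simp add: nn_integral_cmult_indicator meas ennreal_mult'' mult.commute)
    also have "\<dots> \<le> (\<integral>\<^sup>+t. ennreal (norm (grad f t)) * indicator (HQ n \<alpha>) t + ennreal g0 * indicator (HQ n \<alpha>) t \<partial>lborel)"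
    proof (intro nn_integral_mono)
      fix t
      show "ennreal L * indicator (HQ n \<alpha>) t \<le> ennreal (norm (grad f t)) * indicator (HQ n \<alpha>) t + ennreal g0 * indicator (HQ n \<alpha>) t"
      proof (cases "t \<in> HQ n \<alpha>")
        case True
        then have "L \<le> norm (grad f t) + g0" using gl[of t] by (simp add: abs_le_iff)
        then have "ennreal L \<le> ennreal (norm (grad f t) + g0)" by (rule ennreal_leI)
        then show ?thesis using True g00 by simp
      qed simp
    qed
    also have "\<dots> = Tc f n \<alpha> + (\<integral>\<^sup>+t. ennreal g0 * indicator (HQ n \<alpha>) t \<partial>lborel)"
      unfolding Tc_def by (rule nn_integral_add) measurable
    also have "(\<integral>\<^sup>+t. ennreal g0 * indicator (HQ n \<alpha>) t \<partial>lborel) = ennreal D"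
      using g00 h0 by (simp add: nn_integral_cmult_indicator meas ennreal_mult'[symmetric] HD[symmetric] mult.commute)
    finally show ?thesis .
  qed
  show "ennreal (norm (dhat n \<alpha> f)) \<le> Tc f n \<alpha> + ennreal (Ec f n \<alpha>)"
  proof -
    have "norm (dhat n \<alpha> f) \<le> h^CARD('n) * L + D" using dn by (simp add: abs_le_iff)
    then have "ennreal (norm (dhat n \<alpha> f)) \<le> ennreal (h^CARD('n) * L + D)"
      by (rule ennreal_leI)
    also have "ennreal (h^CARD('n) * L + D) = ennreal (h^CARD('n) * L) + ennreal D"
      using h0 D0 by (intro ennreal_plus) (auto simp: L_def)
    also have "\<dots> \<le> Tc f n \<alpha> + ennreal D + ennreal D"
      using T_low by (simp add: add_right_mono)
    also have "\<dots> = Tc f n \<alpha> + ennreal (Ec f n \<alpha>)"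
      using D0 by (simp add: Ec ennreal_plus[symmetric] add.assoc del: ennreal_plus)
    finally show ?thesis .
  qed
  show "Tc f n \<alpha> \<le> ennreal (norm (dhat n \<alpha> f)) + ennreal (Ec f n \<alpha>)"
  proof -
    have "h^CARD('n) * L + D \<le> norm (dhat n \<alpha> f) + 2 * D" using dn by (simp add: abs_le_iff)
    then have "ennreal (h^CARD('n) * L + D) \<le> ennreal (norm (dhat n \<alpha> f) + 2 * D)"
      by (rule ennreal_leI)
    also have "\<dots> = ennreal (norm (dhat n \<alpha> f)) + ennreal (Ec f n \<alpha>)"
      using D0 by (simp add: Ec)
    finally show ?thesis using T_up by (rule order_trans[rotated])
  qed
qed

lemma HQ_unique: "t \<in> HQ n \<alpha> \<longleftrightarrow> \<alpha> = (\<chi> k. \<lfloor>2^n * t$k\<rfloor>)"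
proof -
  have "(real_of_int (\<alpha>$k) / 2^n \<le> t$k \<and> t$k < (real_of_int (\<alpha>$k) + 1) / 2^n)
        \<longleftrightarrow> \<alpha>$k = \<lfloor>2^n * t$k\<rfloor>" for k
  proof -
    have "(real_of_int (\<alpha>$k) / 2^n \<le> t$k \<and> t$k < (real_of_int (\<alpha>$k) + 1) / 2^n)
        \<longleftrightarrow> (real_of_int (\<alpha>$k) \<le> 2^n * t$k \<and> 2^n * t$k < real_of_int (\<alpha>$k) + 1)"
      by (simp add: field_simps)
    also have "\<dots> \<longleftrightarrow> \<alpha>$k = \<lfloor>2^n * t$k\<rfloor>"
      by (simp add: floor_eq_iff eq_commute[of "\<alpha>$k"])
    finally show ?thesis .
  qed
  then show ?thesis by (simp add: HQ_def vec_eq_iff)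
qed

lemma infsum_indicator_single:
  fixes G :: ennreal and t :: "real^'n::finite"
  shows "(\<Sum>\<^sub>\<infinity>\<alpha>. G * indicator (HQ n \<alpha>) t) = G"
proof -
  let ?a = "(\<chi> k. \<lfloor>2^n * t$k\<rfloor>) :: int^'n"
  have "(\<Sum>\<^sub>\<infinity>\<alpha>::int^'n. G * indicator (HQ n \<alpha>) t) = (\<Sum>\<^sub>\<infinity>\<alpha>\<in>{?a}. G * indicator (HQ n \<alpha>) t)"
    by (intro infsum_cong_neutral) (auto simp: HQ_unique indicator_def)
  also have "\<dots> = G" by (simp add: HQ_unique indicator_def)
  finally show ?thesis .
qed

lemma TV_decomp:
  fixes f :: "real^'n::finite \<Rightarrow> real"
  assumes C: "C2 f"
  shows "TV f = (\<Sum>\<^sub>\<infinity>\<alpha>. Tc f n \<alpha>)"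
proof -
  note [measurable] = grad_meas[OF C]
  have "TV f = (\<integral>\<^sup>+t. (\<Sum>\<^sub>\<infinity>\<alpha>::int^'n. ennreal (norm (grad f t)) * indicator (HQ n \<alpha>) t) \<partial>lborel)"
    unfolding TV_def by (simp add: infsum_indicator_single)
  also have "\<dots> = (\<Sum>\<^sub>\<infinity>\<alpha>. Tc f n \<alpha>)"
    unfolding Tc_def by (rule nn_integral_infsum) measurable
  finally show ?thesis .
qed

lemma infsum_cmult_ennreal:
  fixes f :: "'a \<Rightarrow> ennreal"
  assumes "c < top"
  shows "(\<Sum>\<^sub>\<infinity>x\<in>A. c * f x) = c * (\<Sum>\<^sub>\<infinity>x\<in>A. f x)"
proof -
  have "(f has_sum (\<Sum>\<^sub>\<infinity>x\<in>A. f x)) A" by (rule has_sum_infsum) simp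
  then have "(sum f \<longlongrightarrow> (\<Sum>\<^sub>\<infinity>x\<in>A. f x)) (finite_subsets_at_top A)"
    by (simp add: has_sum_def)
  then have "((\<lambda>F. c * sum f F) \<longlongrightarrow> c * (\<Sum>\<^sub>\<infinity>x\<in>A. f x)) (finite_subsets_at_top A)"
    by (rule ennreal_tendsto_cmult[OF assms])
  then have "((\<lambda>x. c * f x) has_sum (c * (\<Sum>\<^sub>\<infinity>x\<in>A. f x))) A"
    by (simp add: has_sum_def sum_distrib_left)
  then show ?thesis by (rule infsumI)
qed

lemma powr_H: "(2::real) powr (- real n * real CARD('n::finite)) = (1/2^n)^CARD('n)"
proof -
  have "(2::real) powr (- real n * real CARD('n)) = (2 powr (- real n)) powr real CARD('n)"
    by (simp add: powr_powr)
  also have "\<dots> = (1/2^n)^CARD('n)"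
    by (simp add: two_powr_neg powr_realpow)
  finally show ?thesis .
qed

lemma main_sum:
  fixes f :: "real^'n::finite \<Rightarrow> real"
  assumes C: "C2 f"
  shows "dsum n f \<le> TV f + ennreal (2 * (real CARD('n) * real CARD('n)) * (1/2^n)) * H n f" and "TV f \<le> dsum n f + ennreal (2 * (real CARD('n) * real CARD('n)) * (1/2^n)) * H n f"
proof -
  define K where "K = ennreal (2 * (real CARD('n) * real CARD('n)) * (1/2^n))"
  have E: "ennreal (Ec f n \<alpha>) = K * ennreal (2 powr (- real n * real CARD('n)) * Mc f n \<alpha>)" for \<alpha>
  proof -
    have "Ec f n \<alpha> = (2 * (real CARD('n) * real CARD('n)) * (1/2^n)) * ((1/2^n)^CARD('n) * Mc f n \<alpha>)"
      by (simp add: Ec_def algebra_simps)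
    then have "ennreal (Ec f n \<alpha>) = ennreal (2 * (real CARD('n) * real CARD('n)) * (1/2^n)) * ennreal ((1/2^n)^CARD('n) * Mc f n \<alpha>)"
      by (simp only:) (rule ennreal_mult; simp add: Mc_nonneg[OF C])
    then show ?thesis unfolding K_def powr_H .
  qed
  have HS: "(\<Sum>\<^sub>\<infinity>\<alpha>. ennreal (Ec f n \<alpha>)) = K * H n f"
    unfolding E H_def Mc_def
    by (rule infsum_cmult_ennreal) (simp add: K_def)
  have "dsum n f \<le> (\<Sum>\<^sub>\<infinity>\<alpha>. Tc f n \<alpha> + ennreal (Ec f n \<alpha>))"
    unfolding dsum_def by (rule infsum_mono) (simp_all add: cube_est(1)[OF C])
  also have "\<dots> = TV f + K * H n f"
    by (simp add: infsum_add TV_decomp[OF C, of n] HS)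
  finally show "dsum n f \<le> TV f + ennreal (2 * (real CARD('n) * real CARD('n)) * (1/2^n)) * H n f" by (simp add: K_def)
  have "TV f \<le> (\<Sum>\<^sub>\<infinity>\<alpha>. ennreal (norm (dhat n \<alpha> f)) + ennreal (Ec f n \<alpha>))"
    unfolding TV_decomp[OF C, of n] by (rule infsum_mono) (simp_all add: cube_est(2)[OF C])
  also have "\<dots> = dsum n f + K * H n f"
    by (simp add: infsum_add dsum_def HS)
  finally show "TV f \<le> dsum n f + ennreal (2 * (real CARD('n) * real CARD('n)) * (1/2^n)) * H n f" by (simp add: K_def)
qed

lemma HQ_decomp:
  fixes G :: "real^'n::finite \<Rightarrow> ennreal"
  assumes [measurable]: "G \<in> borel_measurable borel"
  shows "(\<integral>\<^sup>+t. G t \<partial>lborel) = (\<Sum>\<^sub>\<infinity>\<alpha>::int^'n. \<integral>\<^sup>+t. G t * indicator (HQ n \<alpha>) t \<partial>lborel)"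
proof -
  have "(\<integral>\<^sup>+t. G t \<partial>lborel) = (\<integral>\<^sup>+t. (\<Sum>\<^sub>\<infinity>\<alpha>::int^'n. G t * indicator (HQ n \<alpha>) t) \<partial>lborel)"
    by (simp add: infsum_indicator_single)
  also have "\<dots> = (\<Sum>\<^sub>\<infinity>\<alpha>::int^'n. \<integral>\<^sup>+t. G t * indicator (HQ n \<alpha>) t \<partial>lborel)"
    by (rule nn_integral_infsum) measurable
  finally show ?thesis .
qed

definition qv :: "nat \<Rightarrow> real^'n::finite \<Rightarrow> int^'n" where
  "qv n t = (\<chi> k. \<lfloor>2^n * t$k\<rfloor>)"

lemma qv_meas[measurable]: "(qv n :: real^'n::finite \<Rightarrow> int^'n) \<in> measurable borel (count_space UNIV)"
proof -
  have "(qv n :: real^'n \<Rightarrow> int^'n) -` {a} = HQ n a" for a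
    by (auto simp: HQ_unique qv_def)
  then show ?thesis
    by (simp add: measurable_count_space_eq2_countable)
qed

definition Phi :: "(real^'n::finite \<Rightarrow> real) \<Rightarrow> nat \<Rightarrow> real^'n \<Rightarrow> ennreal" where
  "Phi f m t = ennreal (Mc f m (qv m t))"

lemma Phi_meas[measurable]: "Phi f m \<in> borel_measurable borel"
proof -
  have "(\<lambda>t. (\<lambda>\<beta>. ennreal (Mc f m \<beta>)) (qv m t)) \<in> borel_measurable borel"
    by (rule measurable_compose[OF qv_meas]) simp
  then show ?thesis by (simp add: Phi_def[abs_def])
qed

lemma Phi_HQ:
  fixes f :: "real^'n::finite \<Rightarrow> real"
  shows "(\<integral>\<^sup>+t. Phi f m t * indicator (HQ m \<beta>) t \<partial>lborel) = ennreal (Mc f m \<beta>) * ennreal ((1/2^m)^CARD('n))"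
proof -
  have "(\<integral>\<^sup>+t. Phi f m t * indicator (HQ m \<beta>) t \<partial>lborel) = (\<integral>\<^sup>+t. ennreal (Mc f m \<beta>) * indicator (HQ m \<beta>) t \<partial>lborel)"
    by (intro nn_integral_cong) (auto simp: Phi_def indicator_def HQ_unique qv_def)
  also have "\<dots> = ennreal (Mc f m \<beta>) * ennreal ((1/2^m)^CARD('n))"
    by (simp add: nn_integral_cmult_indicator HQ_measure)
  finally show ?thesis .
qed

lemma H_Phi:
  fixes f :: "real^'n::finite \<Rightarrow> real"
  assumes C: "C2 f"
  shows "H m f = (\<integral>\<^sup>+t. Phi f m t \<partial>lborel)"
proof -
  have "H m f = (\<Sum>\<^sub>\<infinity>\<beta>::int^'n. \<integral>\<^sup>+t. Phi f m t * indicator (HQ m \<beta>) t \<partial>lborel)"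
    unfolding H_def Phi_HQ powr_H Mc_def[symmetric]
    by (intro infsum_cong) (simp add: ennreal_mult'' mult.commute Mc_nonneg[OF C])
  also have "\<dots> = (\<integral>\<^sup>+t. Phi f m t \<partial>lborel)"
    by (rule HQ_decomp[symmetric]) measurable
  finally show ?thesis .
qed

lemma bdd_cube: "C2 f \<Longrightarrow> bdd_above (hessF f ` cube n \<alpha>)"
proof -
  assume C: "C2 f"
  have "compact (hessF f ` cube n \<alpha>)"
    by (rule compact_continuous_image[OF continuous_on_subset[OF hessF_cont[OF C]] cube_compact]) simp
  then show ?thesis
    by (simp add: bounded_imp_bdd_above compact_imp_bounded)
qed

lemma Mc_mono:
  assumes C: "C2 f" and sub: "cube n \<alpha> \<subseteq> cube m \<beta>"
  shows "Mc f n \<alpha> \<le> Mc f m \<beta>"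
  unfolding Mc_def
  by (rule cSUP_subset_mono[OF _ bdd_cube[OF C] sub]) (use cube_ne in auto)

lemma floor_nest:
  fixes x :: real
  assumes "m \<le> n"
  shows "2^(n-m) * \<lfloor>2^m * x\<rfloor> \<le> \<lfloor>2^n * x\<rfloor>"
    and "\<lfloor>2^n * x\<rfloor> + 1 \<le> 2^(n-m) * (\<lfloor>2^m * x\<rfloor> + 1)"
proof -
  have p: "(2::real)^n = 2^(n-m) * 2^m" using assms by (simp add: power_add[symmetric])
  have "real_of_int (2^(n-m) * \<lfloor>2^m * x\<rfloor>) \<le> 2^n * x"
    unfolding p using floor_le_iff[of "2^m * x"] by (simp add: mult.assoc)
  then show "2^(n-m) * \<lfloor>2^m * x\<rfloor> \<le> \<lfloor>2^n * x\<rfloor>" by (simp add: le_floor_iff)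
  have "2^n * x < real_of_int (2^(n-m) * (\<lfloor>2^m * x\<rfloor> + 1))"
    unfolding p by (simp add: mult.assoc)
  then have "\<lfloor>2^n * x\<rfloor> < 2^(n-m) * (\<lfloor>2^m * x\<rfloor> + 1)" by (simp add: floor_less_iff)
  then show "\<lfloor>2^n * x\<rfloor> + 1 \<le> 2^(n-m) * (\<lfloor>2^m * x\<rfloor> + 1)" by simp
qed

lemma nest_real:
  fixes c z :: int
  assumes ab: "a \<le> b" and 1: "2^(b-a) * c \<le> z" and 2: "z + 1 \<le> 2^(b-a) * (c + 1)"
  shows "real_of_int c / 2^a \<le> real_of_int z / 2^b" "(real_of_int z + 1) / 2^b \<le> (real_of_int c + 1) / 2^a"
proof -
  have p: "(2::real)^b = 2^(b-a) * 2^a" using ab by (simp add: power_add[symmetric])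
  have e: "real_of_int (2^(b-a) * w) / 2^b = real_of_int w / 2^a" for w :: int
    unfolding p by simp
  have "real_of_int (2^(b-a) * c) / 2^b \<le> real_of_int z / 2^b"
    using 1 by (intro divide_right_mono) (simp_all only: of_int_le_iff, simp)
  then show "real_of_int c / 2^a \<le> real_of_int z / 2^b" unfolding e .
  have "real_of_int (z + 1) / 2^b \<le> real_of_int (2^(b-a) * (c + 1)) / 2^b"
    using 2 by (intro divide_right_mono) (simp_all only: of_int_le_iff, simp)
  then show "(real_of_int z + 1) / 2^b \<le> (real_of_int c + 1) / 2^a" unfolding e by simp
qed

lemma cube_nest:
  fixes c z :: "int^'n::finite"
  assumes ab: "a \<le> b" and "\<And>k. 2^(b-a) * c$k \<le> z$k" and "\<And>k. z$k + 1 \<le> 2^(b-a) * (c$k + 1)"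
  shows "cube b z \<subseteq> cube a c" and "HQ b z \<subseteq> HQ a c"
proof -
  note nr = nest_real[OF ab assms(2,3)]
  show "cube b z \<subseteq> cube a c"
    unfolding mem_cube subset_iff using nr by (meson order_trans)
  show "HQ b z \<subseteq> HQ a c"
    unfolding HQ_def subset_iff mem_Collect_eq using nr by (meson order_trans order_less_le_trans)
qed

lemma H_mono_ge:
  fixes f :: "real^'n::finite \<Rightarrow> real"
  assumes C: "C2 f" and mn: "m \<le> n"
  shows "H n f \<le> H m f"
proof -
  have "Phi f n t \<le> Phi f m t" for t
  proof -
    have "cube n (qv n t) \<subseteq> cube m (qv m t :: int^'n)"
      by (rule cube_nest(1)[OF mn]) (simp_all add: qv_def floor_nest[OF mn])
    then show ?thesis unfolding Phi_def by (intro ennreal_leI Mc_mono[OF C])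
  qed
  then show ?thesis unfolding H_Phi[OF C] by (intro nn_integral_mono)
qed

lemma child_cube:
  fixes x :: "real^'n::finite"
  assumes nm: "n \<le> m" and x: "x \<in> cube n \<alpha>"
  obtains \<beta> where "x \<in> cube m \<beta>" "HQ m \<beta> \<subseteq> HQ n \<alpha>"
proof -
  define d where "d = m - n"
  define \<beta> :: "int^'n" where "\<beta> = (\<chi> k. min \<lfloor>2^m * x$k\<rfloor> (2^d * (\<alpha>$k + 1) - 1))"
  have p: "(2::real)^m = 2^d * 2^n" using nm by (simp add: d_def power_add[symmetric])
  have xb: "real_of_int (\<alpha>$k) \<le> 2^n * x$k" "2^n * x$k \<le> real_of_int (\<alpha>$k) + 1" for k
    using x unfolding mem_cube by (auto simp: field_simps dest!: spec[of _ k])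
  have d1: "(1::int) \<le> 2^d" by simp
  have c1: "2^d * \<alpha>$k \<le> \<beta>$k" for k
  proof -
    have "real_of_int (2^d * \<alpha>$k) \<le> 2^m * x$k"
      unfolding p using xb(1)[of k] by (simp add: mult.assoc mult_left_mono)
    then have "2^d * \<alpha>$k \<le> \<lfloor>2^m * x$k\<rfloor>" by (simp add: le_floor_iff)
    moreover have "2^d * \<alpha>$k \<le> 2^d * (\<alpha>$k + 1) - 1" using d1 by (simp add: algebra_simps)
    ultimately show ?thesis by (simp add: \<beta>_def)
  qed
  have c2: "\<beta>$k + 1 \<le> 2^d * (\<alpha>$k + 1)" for k by (simp add: \<beta>_def)
  have "HQ m \<beta> \<subseteq> HQ n \<alpha>"
    by (rule cube_nest(2)[OF nm]) (use c1 c2 in \<open>simp_all add: d_def\<close>)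
  moreover have "x \<in> cube m \<beta>"
    unfolding mem_cube
  proof
    fix k
    have f1: "real_of_int \<lfloor>2^m * x$k\<rfloor> \<le> 2^m * x$k" by simp
    have f2: "2^m * x$k < real_of_int \<lfloor>2^m * x$k\<rfloor> + 1" by simp
    have b1: "real_of_int (\<beta>$k) \<le> 2^m * x$k"
      using f1 by (simp add: \<beta>_def) linarith
    have b2: "2^m * x$k \<le> real_of_int (\<beta>$k) + 1"
    proof (cases "\<lfloor>2^m * x$k\<rfloor> \<le> 2^d * (\<alpha>$k + 1) - 1")
      case True
      then show ?thesis using f2 by (simp add: \<beta>_def)
    next
      case False
      then have "\<beta>$k = 2^d * (\<alpha>$k + 1) - 1" by (simp add: \<beta>_def)
      then have "real_of_int (\<beta>$k) + 1 = 2^d * (real_of_int (\<alpha>$k) + 1)" by simp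
      moreover have "2^m * x$k \<le> 2^d * (real_of_int (\<alpha>$k) + 1)"
        unfolding p using xb(2)[of k] by (simp add: mult.assoc mult_left_mono)
      ultimately show ?thesis by simp
    qed
    show "real_of_int (\<beta>$k) / 2^m \<le> x$k \<and> x$k \<le> (real_of_int (\<beta>$k) + 1) / 2^m"
      using b1 b2 by (simp add: field_simps)
  qed
  ultimately show ?thesis using that by blast
qed

lemma H_mono_le:
  fixes f :: "real^'n::finite \<Rightarrow> real"
  assumes C: "C2 f" and nm: "n \<le> m"
  shows "H n f \<le> ennreal (2^((m-n)*CARD('n))) * H m f"
proof -
  define c :: real where "c = 2^((m-n)*CARD('n))"
  have hc: "(1/2^n)^CARD('n) = c * (1/2^m :: real)^CARD('n)"
  proof -
    have "(2::real)^m = 2^(m-n) * 2^n" using nm by (simp add: power_add[symmetric])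
    then have "(1/2^n :: real) = 2^(m-n) * (1/2^m)" by (simp add: field_simps)
    then have "(1/2^n :: real)^CARD('n) = (2^(m-n))^CARD('n) * (1/2^m)^CARD('n)"
      by (simp only: power_mult_distrib)
    then show ?thesis by (simp add: c_def power_mult)
  qed
  have per: "ennreal (2 powr (- real n * real CARD('n)) * Mc f n \<alpha>)
      \<le> ennreal c * (\<integral>\<^sup>+t. Phi f m t * indicator (HQ n \<alpha>) t \<partial>lborel)" for \<alpha>
  proof -
    obtain x where x: "x \<in> cube n \<alpha>" and xmax: "\<forall>y\<in>cube n \<alpha>. hessF f y \<le> hessF f x"
      using continuous_attains_sup[OF cube_compact _ continuous_on_subset[OF hessF_cont[OF C]], of n \<alpha>]
        cube_ne by blast
    have Mx: "Mc f n \<alpha> \<le> hessF f x"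
      unfolding Mc_def using xmax cube_ne by (intro cSUP_least) auto
    obtain \<beta> where xb: "x \<in> cube m \<beta>" and sub: "HQ m \<beta> \<subseteq> HQ n \<alpha>"
      using child_cube[OF nm x] by blast
    have MM: "Mc f n \<alpha> \<le> Mc f m \<beta>" using Mx hessF_le_Mc[OF C xb] by simp
    have "ennreal (2 powr (- real n * real CARD('n)) * Mc f n \<alpha>) \<le> ennreal ((1/2^n)^CARD('n) * Mc f m \<beta>)"
      unfolding powr_H by (intro ennreal_leI mult_left_mono MM) simp
    also have "\<dots> = ennreal c * (ennreal (Mc f m \<beta>) * ennreal ((1/2^m)^CARD('n)))"
      unfolding hc using Mc_nonneg[OF C, of m \<beta>]
      by (simp add: c_def ennreal_mult'' ennreal_mult mult_ac)
    also have "\<dots> = ennreal c * (\<integral>\<^sup>+t. Phi f m t * indicator (HQ m \<beta>) t \<partial>lborel)"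
      by (simp add: Phi_HQ)
    also have "\<dots> \<le> ennreal c * (\<integral>\<^sup>+t. Phi f m t * indicator (HQ n \<alpha>) t \<partial>lborel)"
      using sub by (intro mult_left_mono nn_integral_mono) (auto simp: indicator_def)
    finally show ?thesis .
  qed
  have "H n f \<le> (\<Sum>\<^sub>\<infinity>\<alpha>::int^'n. ennreal c * (\<integral>\<^sup>+t. Phi f m t * indicator (HQ n \<alpha>) t \<partial>lborel))"
    unfolding H_def Mc_def[symmetric] by (rule infsum_mono[OF ennsum ennsum per])
  also have "\<dots> = ennreal c * (\<Sum>\<^sub>\<infinity>\<alpha>::int^'n. \<integral>\<^sup>+t. Phi f m t * indicator (HQ n \<alpha>) t \<partial>lborel)"
    by (rule infsum_cmult_ennreal) simp
  also have "\<dots> = ennreal c * H m f"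
    by (simp add: H_Phi[OF C, of m] HQ_decomp[symmetric])
  finally show ?thesis by (simp add: c_def)
qed

lemma hess_int_zero:
  fixes f :: "real^'n::finite \<Rightarrow> real"
  assumes C: "C2 f" and z: "hess_int f = 0"
  shows "H n f = 0"
proof -
  have hc: "continuous_on UNIV (hessF f)" by (rule hessF_cont[OF C])
  then have hm: "hessF f \<in> borel_measurable borel" by (simp add: borel_measurable_continuous_onI)
  then have "(\<lambda>x. ennreal (hessF f x)) \<in> borel_measurable lborel" by measurable
  then have "AE x in lborel. ennreal (hessF f x) = 0"
    using z unfolding hess_int_def by (simp add: nn_integral_0_iff_AE)
  then have "AE x in lborel. x \<in> {x. hessF f x = 0}"
    by eventually_elim (use hessF_nonneg[of f] in \<open>auto simp: antisym\<close>)
  then have ae: "AE x in lebesgue. x \<in> {x. hessF f x = 0}"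
    by (rule AE_completion)
  have cl: "closed {x. hessF f x = 0}"
    using hc by (intro closed_Collect_eq) (auto intro: continuous_intros)
  have h0: "hessF f x = 0" for x
    using mem_closed_if_AE_lebesgue[OF cl ae] by simp
  have "Mc f n \<alpha> = 0" for \<alpha>
    unfolding Mc_def h0 by (rule cSUP_const) (use cube_ne in auto)
  then show ?thesis unfolding H_def Mc_def[symmetric] by simp
qed

lemma H_bound_n0:
  fixes f :: "real^'n::finite \<Rightarrow> real"
  assumes C: "C2 f" and n: "n0 \<le> n"
  shows "H n f \<le> ennreal (2^((m-n0)*CARD('n))) * H m f"
proof (cases "m \<le> n")
  case True
  have "H n f \<le> H m f" by (rule H_mono_ge[OF C True])
  also have "\<dots> \<le> ennreal (2^((m-n0)*CARD('n))) * H m f"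
  proof -
    have "(1::ennreal) \<le> ennreal (2^((m-n0)*CARD('n)))" by simp
    then show ?thesis using mult_right_mono[of 1 _ "H m f"] by simp
  qed
  finally show ?thesis .
next
  case False
  have "H n f \<le> ennreal (2^((m-n)*CARD('n))) * H m f" by (rule H_mono_le[OF C]) (use False in simp)
  also have "\<dots> \<le> ennreal (2^((m-n0)*CARD('n))) * H m f"
    using n by (intro mult_right_mono ennreal_leI power_increasing) auto
  finally show ?thesis .
qed

theorem theorem4p1:
  fixes f :: "real^'n::finite \<Rightarrow> real"
  assumes "C2 f"
    and "\<exists>m. H m f < \<infinity>"
  shows "\<forall>n0::nat. \<exists>C::real. C > 0 \<and> (\<forall>n\<ge>n0.
           dsum n f \<le> TV f + ennreal (C * 2 powr (- real n)) * hess_int f \<and>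
           TV f \<le> dsum n f + ennreal (C * 2 powr (- real n)) * hess_int f)"
proof
  fix n0 :: nat
  note C = assms(1)
  obtain m where Hm: "H m f < \<infinity>" using assms(2) by blast
  define S :: real where "S = 2 * (real CARD('n) * real CARD('n))"
  define c0 :: real where "c0 = 2^((m-n0)*CARD('n))"
  define hm where "hm = enn2real (H m f)"
  have hmE: "H m f = ennreal hm" using Hm by (simp add: hm_def)
  have hm0: "hm \<ge> 0" by (simp add: hm_def)
  have S0: "S \<ge> 0" by (simp add: S_def)
  have c00: "c0 > 0" by (simp add: c0_def)
  have err: "ennreal (S * (1/2^n)) * H n f \<le> ennreal (S * c0 * hm * (1/2^n))" if "n0 \<le> n" for n
  proof -
    have "ennreal (S * (1/2^n)) * H n f \<le> ennreal (S * (1/2^n)) * (ennreal c0 * ennreal hm)"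
      using H_bound_n0[OF C that, of m] by (intro mult_left_mono) (simp_all add: c0_def hmE)
    also have "\<dots> = ennreal (S * c0 * hm * (1/2^n))"
      using S0 c00 hm0 by (simp add: ennreal_mult[symmetric] mult_ac)
    finally show ?thesis .
  qed
  have ms: "dsum n f \<le> TV f + ennreal (S * (1/2^n)) * H n f"
      "TV f \<le> dsum n f + ennreal (S * (1/2^n)) * H n f" for n
    using main_sum[OF C, of n] by (simp_all add: S_def)
  show "\<exists>C::real. C > 0 \<and> (\<forall>n\<ge>n0.
           dsum n f \<le> TV f + ennreal (C * 2 powr (- real n)) * hess_int f \<and>
           TV f \<le> dsum n f + ennreal (C * 2 powr (- real n)) * hess_int f)"
  proof (cases "hess_int f = top")
    case True
    have "ennreal (1 * 2 powr (- real n)) * hess_int f = top" for n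
      using True by (simp add: ennreal_mult_top)
    then show ?thesis by (intro exI[of _ 1]) simp
  next
    case notop: False
    show ?thesis
    proof (cases "hess_int f = 0")
      case True
      have "H n f = 0" for n by (rule hess_int_zero[OF C True])
      then have "dsum n f \<le> TV f" "TV f \<le> dsum n f" for n using ms[of n] by simp_all
      then show ?thesis by (intro exI[of _ 1]) (auto intro: add_increasing2)
    next
      case False
      define I where "I = enn2real (hess_int f)"
      have IE: "hess_int f = ennreal I" using notop by (simp add: I_def less_top)
      have "I \<noteq> 0" using False IE by auto
      moreover have "I \<ge> 0" by (simp add: I_def)
      ultimately have I0: "I > 0" by simp
      define K where "K = S * c0 * hm / I + 1"
      have "S * c0 * hm / I \<ge> 0" using S0 c00 hm0 I0 by simp
      then have K0: "K > 0" unfolding K_def by linarith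
      have KI: "S * c0 * hm \<le> K * I"
        using I0 by (simp add: K_def field_simps)
      have bnd: "ennreal (S * (1/2^n)) * H n f \<le> ennreal (K * 2 powr (- real n)) * hess_int f"
        if "n0 \<le> n" for n
      proof -
        have "ennreal (S * (1/2^n)) * H n f \<le> ennreal (S * c0 * hm * (1/2^n))" by (rule err[OF that])
        also have "\<dots> \<le> ennreal (K * I * (1/2^n))"
          by (intro ennreal_leI mult_right_mono KI) simp
        also have "\<dots> = ennreal (K * 2 powr (- real n)) * hess_int f"
          using K0 I0 by (simp add: IE two_powr_neg ennreal_mult[symmetric] mult_ac)
        finally show ?thesis .
      qed
      show ?thesis
      proof (intro exI[of _ K] conjI K0 allI impI)
        fix n assume n: "n0 \<le> n"
        show "dsum n f \<le> TV f + ennreal (K * 2 powr (- real n)) * hess_int f"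
          using ms(1)[of n] bnd[OF n] by (meson add_left_mono order_trans)
        show "TV f \<le> dsum n f + ennreal (K * 2 powr (- real n)) * hess_int f"
          using ms(2)[of n] bnd[OF n] by (meson add_left_mono order_trans)
      qed
    qed
  qed
qed

end
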